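(* Let $G$ be a connected nilpotent Lie group and $V$ a finite-dimensional real $G$-module of unipotent type. Then for every $v\in V$, the orbit $Gv$ is dense in its affine hull (the smallest affine subspace of $V$ containing $Gv$) with respect to the Bohr topology of $V$.
   Context: A finite-dimensional $G$-module $V$ is of unipotent type if the Lie algebra $\mathfrak g$ of $G$ acts on $V$ by nilpotent operators. For the additive group of $V$ (a locally compact abelian group) with Pontryagin dual $V^*$, the Bohr compactification $bV$ is the dual of $V^*$ with the discrete topology, and $V$ embeds densely in $bV$ by identifying $V$ with its double dual. The Bohr topology of $V$ is the relative topology of $V$ as a subset of $bV$ (equivalently, the coarsest topology making all continuous characters of $V$ continuous). *)

theory Defs
  imports "HOL-Analysis.Analysis"
begin

definition continuous_characters :: "('v::euclidean_space \<Rightarrow> complex) set" where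
  "continuous_characters = {ch. continuous_on UNIV ch \<and> (\<forall>x. norm (ch x) = 1)
      \<and> (\<forall>x y. ch (x + y) = ch x * ch y)}"

definition bohr_topology :: "'v::euclidean_space topology" where
  "bohr_topology = topology_generated_by
     {ch -` U | ch U. ch \<in> continuous_characters \<and> open U}"

definition lie_bracket :: "('v::real_vector \<Rightarrow> 'v) \<Rightarrow> ('v \<Rightarrow> 'v) \<Rightarrow> ('v \<Rightarrow> 'v)" where
  "lie_bracket X Y = (\<lambda>v. X (Y v) - Y (X v))"

definition lie_subalgebra :: "('v::real_vector \<Rightarrow> 'v) set \<Rightarrow> bool" where
  "lie_subalgebra L \<longleftrightarrow> (\<forall>X\<in>L. linear X) \<and> (\<lambda>_. 0) \<in> L
     \<and> (\<forall>X\<in>L. \<forall>Y\<in>L. (\<lambda>v. X v + Y v) \<in> L)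
     \<and> (\<forall>c::real. \<forall>X\<in>L. (\<lambda>v. c *\<^sub>R X v) \<in> L)
     \<and> (\<forall>X\<in>L. \<forall>Y\<in>L. lie_bracket X Y \<in> L)"

definition nilpotent_lie_algebra :: "('v::real_vector \<Rightarrow> 'v) set \<Rightarrow> bool" where
  "nilpotent_lie_algebra L \<longleftrightarrow> (\<exists>k. \<forall>xs Y. length xs = k \<and> set xs \<subseteq> L \<and> Y \<in> L
       \<longrightarrow> foldr lie_bracket xs Y = (\<lambda>_. 0))"

definition nilpotent_op :: "('v::real_vector \<Rightarrow> 'v) \<Rightarrow> bool" where
  "nilpotent_op X \<longleftrightarrow> (\<exists>k. (X ^^ k) = (\<lambda>_. 0))"

definition op_exp :: "('v::euclidean_space \<Rightarrow> 'v) \<Rightarrow> ('v \<Rightarrow> 'v)" where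
  "op_exp X = (\<lambda>v. (\<Sum>k. (1 / fact k) *\<^sub>R (X ^^ k) v))"

text \<open>The connected Lie subgroup of GL(V) with Lie algebra L: generated by exp(L).\<close>
inductive_set lie_group_of :: "('v::euclidean_space \<Rightarrow> 'v) set \<Rightarrow> ('v \<Rightarrow> 'v) set"
  for L where
  id_in: "id \<in> lie_group_of L"
| exp_in: "X \<in> L \<Longrightarrow> op_exp X \<in> lie_group_of L"
| comp_in: "g \<in> lie_group_of L \<Longrightarrow> h \<in> lie_group_of L \<Longrightarrow> g \<circ> h \<in> lie_group_of L"
| inv_in: "g \<in> lie_group_of L \<Longrightarrow> inv g \<in> lie_group_of L"

end

theory Submission
  imports Defs "HOL-Computational_Algebra.Polynomial"
begin


definition cl :: "('v \<Rightarrow> complex) set \<Rightarrow> real \<Rightarrow> 'v \<Rightarrow> 'v \<Rightarrow> bool" where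
  "cl F e x y \<longleftrightarrow> (\<forall>ch\<in>F. norm (ch x - ch y) < e)"

lemma char_props:
  assumes "ch \<in> continuous_characters"
  shows "continuous_on UNIV ch" "norm (ch x) = 1" "ch (x + y) = ch x * ch y"
  using assms unfolding continuous_characters_def by auto

lemma char_zero:
  assumes "ch \<in> continuous_characters" shows "ch 0 = 1"
proof -
  have "ch 0 = ch 0 * ch 0" using char_props(3)[OF assms, of 0 0] by simp
  moreover have "ch 0 \<noteq> 0" using char_props(2)[OF assms, of 0] by auto
  ultimately show ?thesis by (metis mult_cancel_left1)
qed

lemma char_diff:
  fixes x y :: "'v::euclidean_space"
  assumes "ch \<in> continuous_characters"
  shows "norm (ch x - ch y) = norm (ch (x - y) - 1)"
proof -
  have h: "ch x = ch (x - y) * ch y" using char_props(3)[OF assms, of "x - y" y] by simp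
  have n: "norm (ch y) = 1" using char_props(2)[OF assms] by auto
  have "ch x - ch y = (ch (x - y) - 1) * ch y" using h by (simp add: algebra_simps)
  then have "norm (ch x - ch y) = norm (ch (x - y) - 1) * norm (ch y)" by (simp add: norm_mult)
  then show ?thesis using n by simp
qed

lemma cl_diff:
  fixes x y :: "'v::euclidean_space"
  assumes "F \<subseteq> continuous_characters"
  shows "cl F e x y \<longleftrightarrow> cl F e (x - y) 0"
  using assms unfolding cl_def
  by (auto simp: char_diff[of _ x y] char_diff[of _ "x - y" 0] subset_iff)

lemma cl_sym: "cl F e x y \<longleftrightarrow> cl F e y x"
  unfolding cl_def by (simp add: norm_minus_commute)

lemma cl_trans: "cl F e1 x y \<Longrightarrow> cl F e2 y z \<Longrightarrow> cl F (e1 + e2) x z"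
  unfolding cl_def
proof (intro ballI)
  fix ch assume a: "\<forall>ch\<in>F. norm (ch x - ch y) < e1" "\<forall>ch\<in>F. norm (ch y - ch z) < e2" and c: "ch \<in> F"
  have "norm (ch x - ch z) \<le> norm (ch x - ch y) + norm (ch y - ch z)"
    using norm_triangle_ineq[of "ch x - ch y" "ch y - ch z"] by simp
  then show "norm (ch x - ch z) < e1 + e2" using a c by fastforce
qed

lemma cl_mono: "cl F e1 x y \<Longrightarrow> e1 \<le> e2 \<Longrightarrow> cl F e2 x y"
  unfolding cl_def by force

lemma cl_refl: "e > 0 \<Longrightarrow> cl F e x x"
  unfolding cl_def by simp

lemma cl_transl:
  fixes x y :: "'v::euclidean_space"
  assumes "F \<subseteq> continuous_characters"
  shows "cl F e (x + w) (y + w) \<longleftrightarrow> cl F e x y"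
  using cl_diff[OF assms, of e "x+w" "y+w"] cl_diff[OF assms, of e x y] by simp

lemma cl_near0:
  fixes F :: "('v::euclidean_space \<Rightarrow> complex) set"
  assumes "finite F" "F \<subseteq> continuous_characters" "e > 0"
  shows "\<exists>d>0. \<forall>x::'v. norm x < d \<longrightarrow> cl F e x 0"
proof -
  have "\<forall>ch\<in>F. eventually (\<lambda>x. norm (ch x - ch 0) < e) (nhds (0::'v))"
  proof
    fix ch assume "ch \<in> F"
    then have "continuous_on UNIV ch" using assms(2) char_props(1) by blast
    then have "(ch \<longlongrightarrow> ch 0) (nhds 0)"
      by (metis UNIV_I continuous_on_def open_UNIV tendsto_at_iff_tendsto_nhds at_within_open)
    then show "eventually (\<lambda>x. norm (ch x - ch 0) < e) (nhds (0::'v))"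
      using assms(3) by (simp add: tendsto_iff dist_norm)
  qed
  then have "eventually (\<lambda>x. \<forall>ch\<in>F. norm (ch x - ch 0) < e) (nhds (0::'v))"
    by (rule eventually_ball_finite[OF assms(1)])
  then obtain d where "d > 0" "\<forall>x. dist x 0 < d \<longrightarrow> (\<forall>ch\<in>F. norm (ch x - ch 0) < e)"
    unfolding eventually_nhds_metric by auto
  then show ?thesis unfolding cl_def dist_norm by (intro exI[of _ d]) simp
qed

lemma bohr_closure_I:
  fixes y :: "'v::euclidean_space"
  assumes "\<And>F e. finite F \<Longrightarrow> F \<subseteq> continuous_characters \<Longrightarrow> e > 0 \<Longrightarrow> \<exists>x\<in>S. cl F e x y"
  shows "y \<in> bohr_topology closure_of S"
proof -
  have one: "(\<lambda>_. 1) \<in> (continuous_characters :: ('v \<Rightarrow> complex) set)"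
    unfolding continuous_characters_def by auto
  have top: "topspace (bohr_topology :: 'v topology) = UNIV"
    unfolding bohr_topology_def topology_generated_by_topspace
    using one by (auto intro!: exI[of _ UNIV] exI[of _ "\<lambda>_::'v. 1::complex"])
  have key: "\<forall>y\<in>T. \<exists>F::('v \<Rightarrow> complex) set. \<exists>e. finite F \<and> F \<subseteq> continuous_characters \<and> e > 0 \<and> {x. cl F e x y} \<subseteq> T"
    if "generate_topology_on {ch -` U | ch U. ch \<in> (continuous_characters :: ('v \<Rightarrow> complex) set) \<and> open U} T" for T :: "'v set"
    using that
  proof (induction rule: generate_topology_on.induct)
    case Empty then show ?case by simp
  next
    case (Int a b)
    show ?case
    proof
      fix y assume "y \<in> a \<inter> b"
      then have ya: "y \<in> a" and yb: "y \<in> b" by auto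
      obtain F1 :: "('v \<Rightarrow> complex) set" and e1 :: real where A1: "finite F1" "F1 \<subseteq> continuous_characters" "e1 > 0" "{x. cl F1 e1 x y} \<subseteq> a"
        using bspec[OF Int.IH(1) ya] by blast
      obtain F2 :: "('v \<Rightarrow> complex) set" and e2 :: real where A2: "finite F2" "F2 \<subseteq> continuous_characters" "e2 > 0" "{x. cl F2 e2 x y} \<subseteq> b"
        using bspec[OF Int.IH(2) yb] by blast
      note A = A1 A2
      have c1: "cl F1 e1 x y" if "cl (F1 \<union> F2) (min e1 e2) x y" for x
        using that unfolding cl_def by (meson UnI1 min_less_iff_conj)
      have c2: "cl F2 e2 x y" if "cl (F1 \<union> F2) (min e1 e2) x y" for x
        using that unfolding cl_def by (meson UnI2 min_less_iff_conj)
      have "{x. cl (F1 \<union> F2) (min e1 e2) x y} \<subseteq> a \<inter> b"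
      proof
        fix x assume "x \<in> {x. cl (F1 \<union> F2) (min e1 e2) x y}"
        then have "cl (F1 \<union> F2) (min e1 e2) x y" by simp
        then have "x \<in> {x. cl F1 e1 x y}" "x \<in> {x. cl F2 e2 x y}" using c1 c2 by auto
        then show "x \<in> a \<inter> b" using A1(4) A2(4) by blast
      qed
      moreover have "finite (F1 \<union> F2)" using A1(1) A2(1) by simp
      moreover have "F1 \<union> F2 \<subseteq> continuous_characters" using A1(2) A2(2) by simp
      moreover have "min e1 e2 > 0" using A1(3) A2(3) by simp
      ultimately show "\<exists>F e. finite F \<and> F \<subseteq> continuous_characters \<and> e > 0 \<and> {x. cl F e x y} \<subseteq> a \<inter> b"
        by blast
    qed
  next
    case (UN K)
    show ?case
    proof
      fix y assume "y \<in> \<Union>K"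
      then obtain k where kK: "k \<in> K" and yk: "y \<in> k" by blast
      obtain F :: "('v \<Rightarrow> complex) set" and e :: real where "finite F" "F \<subseteq> continuous_characters" "e > 0" "{x. cl F e x y} \<subseteq> k"
        using bspec[OF UN.IH[OF kK] yk] by blast
      then show "\<exists>F e. finite F \<and> F \<subseteq> continuous_characters \<and> e > 0 \<and> {x. cl F e x y} \<subseteq> \<Union>K"
        using \<open>k \<in> K\<close> by blast
    qed
  next
    case (Basis s)
    then obtain ch U where s: "s = ch -` U" "ch \<in> continuous_characters" "open U" by blast
    show ?case
    proof
      fix y assume "y \<in> s"
      then have "ch y \<in> U" using s by auto
      then obtain e where e: "e > 0" "ball (ch y) e \<subseteq> U" using s(3) open_contains_ball by blast
      have "{x. cl {ch} e x y} \<subseteq> s"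
      proof
        fix x assume "x \<in> {x. cl {ch} e x y}"
        then have "dist (ch y) (ch x) < e" by (simp add: cl_def dist_norm norm_minus_commute)
        then have "ch x \<in> U" using e(2) by auto
        then show "x \<in> s" using s(1) by simp
      qed
      then show "\<exists>F e. finite F \<and> F \<subseteq> continuous_characters \<and> e > 0 \<and> {x. cl F e x y} \<subseteq> s"
        using s e by (intro exI[of _ "{ch}"] exI[of _ e]) auto
    qed
  qed
  show ?thesis
    unfolding in_closure_of top
  proof (intro conjI allI impI)
    fix T assume yT: "y \<in> T \<and> openin bohr_topology T"
    then have g: "generate_topology_on {ch -` U | ch U. ch \<in> (continuous_characters :: ('v \<Rightarrow> complex) set) \<and> open U} T"
      unfolding bohr_topology_def openin_topology_generated_by_iff by blast
    from bspec[OF key[OF g] conjunct1[OF yT]]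
    obtain F :: "('v \<Rightarrow> complex) set" and e :: real where FF: "finite F" "F \<subseteq> continuous_characters" "e > 0" "{x. cl F e x y} \<subseteq> T"
      by blast
    obtain x where "x \<in> S" "cl F e x y" using assms[OF FF(1-3)] by blast
    then show "\<exists>x. x \<in> S \<and> x \<in> T" using FF(4) by blast
  qed simp
qed



lemma cl_subseq:
  fixes x :: "nat \<Rightarrow> 'v::euclidean_space"
  assumes "finite F" "F \<subseteq> continuous_characters" "e > 0"
  shows "\<exists>r::nat\<Rightarrow>nat. strict_mono r \<and> (\<forall>i j. cl F e (x (r i)) (x (r j)))"
  using assms(1,2)
proof (induction F rule: finite_induct)
  case empty
  have "strict_mono (id::nat\<Rightarrow>nat) \<and> (\<forall>i j. cl {} e (x (id i)) (x (id j)))"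
    by (simp add: strict_mono_id cl_def)
  then show ?case by blast
next
  case (insert ch F)
  obtain r :: "nat \<Rightarrow> nat" where r: "strict_mono r" "\<forall>i j. cl F e (x (r i)) (x (r j))"
    using insert.IH insert.prems by auto
  have ch: "ch \<in> continuous_characters" using insert.prems by auto
  have sp: "\<And>n. ch (x (r n)) \<in> sphere 0 1" using char_props(2)[OF ch] by simp
  obtain l and r' :: "nat \<Rightarrow> nat" where lr: "l \<in> sphere 0 1" "strict_mono r'" "((\<lambda>n. ch (x (r n))) \<circ> r') \<longlonglongrightarrow> l"
    using compact_sphere[of "0::complex" 1, unfolded compact_def, rule_format, of "\<lambda>n. ch (x (r n))", OF sp] by blast
  obtain N where N: "\<forall>n\<ge>N. norm (((\<lambda>n. ch (x (r n))) \<circ> r') n - l) < e/2"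
    using LIMSEQ_D[OF lr(3)] assms(3) by (meson half_gt_zero)
  define r2 where "r2 = (\<lambda>n. r (r' (n + N)))"
  have sm: "strict_mono r2" unfolding r2_def using r(1) lr(2)
    by (simp add: strict_mono_def)
  have "cl (insert ch F) e (x (r2 i)) (x (r2 j))" for i j
  proof -
    have a: "norm (ch (x (r2 i)) - l) < e/2" using N[rule_format, of "i + N"] by (simp add: r2_def)
    have b: "norm (ch (x (r2 j)) - l) < e/2" using N[rule_format, of "j + N"] by (simp add: r2_def)
    have "norm (ch (x (r2 i)) - ch (x (r2 j))) \<le> norm (ch (x (r2 i)) - l) + norm (ch (x (r2 j)) - l)"
      using norm_triangle_ineq4[of "ch (x (r2 i)) - l" "ch (x (r2 j)) - l"] by simp
    then have "norm (ch (x (r2 i)) - ch (x (r2 j))) < e" using a b by linarith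
    moreover have "cl F e (x (r2 i)) (x (r2 j))" using r(2) by (simp add: r2_def)
    ultimately show ?thesis unfolding cl_def by simp
  qed
  then show ?case using sm by blast
qed

lemma cl_recur:
  fixes a :: "'v::euclidean_space"
  assumes "finite F" "F \<subseteq> continuous_characters" "e > 0"
  shows "\<exists>N\<ge>M. cl F e (N *\<^sub>R a) 0"
proof -
  define M' where "M' = max M 1"
  have M': "M' \<ge> M" "M' \<ge> 1" unfolding M'_def by auto
  obtain r :: "nat \<Rightarrow> nat" where r: "strict_mono r" "\<forall>i j. cl F e ((real (r i) * M') *\<^sub>R a) ((real (r j) * M') *\<^sub>R a)"
    using cl_subseq[OF assms, of "\<lambda>n. (real n * M') *\<^sub>R a"] by auto
  have lt: "r 0 < r 1" using r(1) by (simp add: strict_mono_def)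
  have "cl F e ((real (r 1) * M') *\<^sub>R a - (real (r 0) * M') *\<^sub>R a) 0"
    using r(2) cl_diff[OF assms(2)] by blast
  moreover have "(real (r 1) * M') *\<^sub>R a - (real (r 0) * M') *\<^sub>R a = ((real (r 1) - real (r 0)) * M') *\<^sub>R a"
    by (simp add: algebra_simps)
  moreover have "(real (r 1) - real (r 0)) * M' \<ge> M"
  proof -
    have "real (r 1) - real (r 0) \<ge> 1" using lt by linarith
    then have "(real (r 1) - real (r 0)) * M' \<ge> 1 * M'" using M' by (intro mult_right_mono) auto
    then show ?thesis using M' by linarith
  qed
  ultimately show ?thesis by (metis)
qed

lemma cl_unifH_pos:
  fixes a :: "'v::euclidean_space"
  assumes "finite F" "F \<subseteq> continuous_characters" "e > 0"
  shows "\<exists>H\<ge>0. \<forall>r\<ge>0. \<exists>\<sigma>\<in>{0..H}. cl F e (\<sigma> *\<^sub>R a) (r *\<^sub>R a)"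
proof (rule ccontr)
  assume "\<not> ?thesis"
  then have bad: "\<forall>H\<ge>0. \<exists>r\<ge>0. \<forall>\<sigma>\<in>{0..H}. \<not> cl F e (\<sigma> *\<^sub>R a) (r *\<^sub>R a)" by blast
  define R where "R = (\<lambda>H. SOME r. r \<ge> 0 \<and> (\<forall>\<sigma>\<in>{0..H}. \<not> cl F e (\<sigma> *\<^sub>R a) (r *\<^sub>R a)))"
  have R: "R H \<ge> 0 \<and> (\<forall>\<sigma>\<in>{0..H}. \<not> cl F e (\<sigma> *\<^sub>R a) (R H *\<^sub>R a))" if "H \<ge> 0" for H
    unfolding R_def using someI_ex[OF bad[rule_format, OF that]] by blast
  define s where "s = rec_nat (R 0) (\<lambda>_ p. R p)"
  have s0: "s 0 = R 0" and sS: "s (Suc n) = R (s n)" for n by (simp_all add: s_def)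
  have spos: "s n \<ge> 0" for n
    by (induction n) (use R in \<open>auto simp: s0 sS\<close>)
  have sfar: "\<forall>\<sigma>\<in>{0..s n}. \<not> cl F e (\<sigma> *\<^sub>R a) (s (Suc n) *\<^sub>R a)" for n
    using R[OF spos[of n]] by (simp add: sS)
  have sstep: "s n \<le> s (Suc n)" for n
  proof (rule ccontr)
    assume "\<not> s n \<le> s (Suc n)"
    then have i: "s (Suc n) \<in> {0..s n}" using spos[of "Suc n"] by simp
    have "cl F e (s (Suc n) *\<^sub>R a) (s (Suc n) *\<^sub>R a)" by (rule cl_refl[OF assms(3)])
    then show False using bspec[OF sfar[of n] i] by simp
  qed
  have smono: "s i \<le> s j" if "i \<le> j" for i j
    using that by (rule lift_Suc_mono_le[of s, OF sstep])
  have far: "\<not> cl F e (s i *\<^sub>R a) (s j *\<^sub>R a)" if ij: "i < j" for i j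
  proof -
    obtain k where k: "j = Suc (i + k)" using less_imp_Suc_add[OF ij] by (elim exE)
    define j' where "j' = i + k"
    have j': "j = Suc j'" using k j'_def by simp
    have "s i \<le> s j'" using smono[of i j'] j'_def by simp
    then have i: "s i \<in> {0..s j'}" using spos[of i] by simp
    show ?thesis using bspec[OF sfar[of j'] i] j' by simp
  qed
  obtain r :: "nat \<Rightarrow> nat" where r: "strict_mono r" "\<forall>i j. cl F e (s (r i) *\<^sub>R a) (s (r j) *\<^sub>R a)"
    using cl_subseq[OF assms, of "\<lambda>n. s n *\<^sub>R a"] by auto
  have "r 0 < r 1" using r(1) by (simp add: strict_mono_def)
  then show False using far[of "r 0" "r 1"] r(2) by blast
qed

lemma cl_unifH:
  fixes a :: "'v::euclidean_space"
  assumes "finite F" "F \<subseteq> continuous_characters" "e > 0"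
  shows "\<exists>H\<ge>0. \<forall>r. \<exists>\<sigma>\<in>{0..H}. cl F e (\<sigma> *\<^sub>R a) (r *\<^sub>R a)"
proof -
  have e2: "e/2 > 0" using assms(3) by simp
  obtain H where H: "H \<ge> 0" "\<forall>r\<ge>0. \<exists>\<sigma>\<in>{0..H}. cl F (e/2) (\<sigma> *\<^sub>R a) (r *\<^sub>R a)"
    using cl_unifH_pos[OF assms(1,2) e2] by blast
  have "\<exists>\<sigma>\<in>{0..H}. cl F e (\<sigma> *\<^sub>R a) (r *\<^sub>R a)" for r
  proof -
    obtain N where N: "N \<ge> - r" "cl F (e/2) (N *\<^sub>R a) 0"
      using cl_recur[OF assms(1,2) e2, of "- r" a] by blast
    have rN: "r + N \<ge> 0" using N(1) by linarith
    obtain \<sigma> where \<sigma>: "\<sigma> \<in> {0..H}" "cl F (e/2) (\<sigma> *\<^sub>R a) ((r + N) *\<^sub>R a)"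
      using H(2)[rule_format, OF rN] by blast
    have "cl F (e/2) (N *\<^sub>R a + r *\<^sub>R a) (0 + r *\<^sub>R a)"
      using N(2) cl_transl[OF assms(2)] by blast
    then have "cl F (e/2) ((r + N) *\<^sub>R a) (r *\<^sub>R a)" by (simp add: scaleR_add_left add.commute)
    then have "cl F (e/2 + e/2) (\<sigma> *\<^sub>R a) (r *\<^sub>R a)" by (rule cl_trans[OF \<sigma>(2)])
    then show ?thesis using \<sigma>(1) by auto
  qed
  then show ?thesis using H(1) by blast
qed



lemma exp_cond:
  fixes D k j :: nat
  assumes "1 \<le> D" "k \<le> D" "1 \<le> j" "j \<le> k" "\<not> (j = 1 \<and> k = D)"
  shows "k - j + 1 \<le> (D - 1) * j"
proof (cases "j = 1")
  case True
  then have "k \<noteq> D" using assms(5) by simp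
  then show ?thesis using True assms by simp
next
  case False
  then have "j \<ge> 2" using assms(3) by simp
  have "(D - 1) * 1 \<le> (D - 1) * j" using assms(3) by (rule mult_le_mono2)
  moreover have "k - j + 1 \<le> D - 1" using \<open>j \<ge> 2\<close> assms(2,4) by linarith
  ultimately show ?thesis by linarith
qed

lemma term_bound:
  fixes t \<sigma> H :: real and D k j :: nat
  assumes "1 \<le> D" "k \<le> D" "1 \<le> j" "j \<le> k" "\<not> (j = 1 \<and> k = D)" "1 \<le> t" "0 \<le> \<sigma>" "\<sigma> \<le> H"
  shows "(\<sigma> / (real D * t ^ (D - 1))) ^ j * t ^ (k - j) \<le> H ^ j / t"
proof -
  have tpos: "t > 0" using assms(6) by simp
  have Dpos: "real D \<ge> 1" using assms(1) by simp
  have e: "t ^ (k - j + 1) \<le> t ^ ((D - 1) * j)"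
    by (rule power_increasing[OF exp_cond[OF assms(1-5)] assms(6)])
  have "(\<sigma> / (real D * t ^ (D - 1))) ^ j = \<sigma> ^ j / (real D ^ j * t ^ ((D - 1) * j))"
    by (simp add: power_divide power_mult_distrib flip: power_mult)
  then have eq: "(\<sigma> / (real D * t ^ (D - 1))) ^ j * t ^ (k - j) * t
      = \<sigma> ^ j * t ^ (k - j + 1) / (real D ^ j * t ^ ((D - 1) * j))"
    by (simp add: algebra_simps)
  have pD: "real D ^ j \<ge> 1" using Dpos by (simp add: one_le_power)
  have pt: "t ^ ((D - 1) * j) > 0" using tpos by simp
  have s: "\<sigma> ^ j \<le> H ^ j" using assms(7,8) by (simp add: power_mono)
  have "\<sigma> ^ j * t ^ (k - j + 1) \<le> H ^ j * t ^ ((D - 1) * j)"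
  proof -
    have "0 \<le> H ^ j" using assms(7,8) by simp
    have "0 \<le> t ^ (k - j + 1)" using tpos by simp
    show ?thesis using mult_mono[OF s e \<open>0 \<le> H ^ j\<close> \<open>0 \<le> t ^ (k - j + 1)\<close>] .
  qed
  also have "\<dots> \<le> H ^ j * (real D ^ j * t ^ ((D - 1) * j))"
  proof -
    have "H ^ j \<ge> 0" using assms(7,8) by simp
    have "1 * t ^ ((D - 1) * j) \<le> real D ^ j * t ^ ((D - 1) * j)"
      using pD pt by (intro mult_right_mono) auto
    then show ?thesis using \<open>H ^ j \<ge> 0\<close> by (intro mult_left_mono) auto
  qed
  finally have calc: "\<sigma> ^ j * t ^ (k - j + 1) \<le> H ^ j * (real D ^ j * t ^ ((D - 1) * j))" .
  have "\<sigma> ^ j * t ^ (k - j + 1) / (real D ^ j * t ^ ((D - 1) * j)) \<le> H ^ j"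
  proof -
    have q: "real D ^ j * t ^ ((D - 1) * j) > 0" by (rule mult_pos_pos) (use pD pt assms(1) in auto)
    show ?thesis by (rule pos_divide_le_eq[OF q, THEN iffD2]) (rule calc)
  qed
  then have "(\<sigma> / (real D * t ^ (D - 1))) ^ j * t ^ (k - j) * t \<le> H ^ j" using eq by simp
  then show ?thesis using tpos by (simp add: le_divide_eq)
qed

lemma scalar_bound:
  fixes t \<sigma> H :: real and D k :: nat
  assumes "1 \<le> D" "k \<le> D" "1 \<le> t" "0 \<le> \<sigma>" "\<sigma> \<le> H"
  shows "\<bar>(t + \<sigma> / (real D * t ^ (D - 1))) ^ k - t ^ k - (if k = D then \<sigma> else 0)\<bar> \<le> (1 + H) ^ k / t"
proof -
  define h where "h = \<sigma> / (real D * t ^ (D - 1))"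
  define g where "g j = real (k choose j) * h ^ j * t ^ (k - j)" for j :: nat
  define c where "c j = (if j = 0 then t ^ k else 0) + (if j = 1 then (if k = D then \<sigma> else 0) else 0)" for j :: nat
  have tpos: "t > 0" using assms(3) by simp
  have H0: "H \<ge> 0" using assms(4,5) by simp
  have hpos: "h \<ge> 0" unfolding h_def using assms(4) tpos by simp
  have ex: "(t + h) ^ k = (\<Sum>j\<le>k. g j)"
    using binomial_ring[of h t k] by (simp add: g_def add.commute)
  have csum: "(\<Sum>j\<le>k. c j) = t ^ k + (if k = D then \<sigma> else 0)"
  proof -
    have "(\<Sum>j\<le>k. c j) = (\<Sum>j\<le>k. if j = 0 then t ^ k else 0) + (\<Sum>j\<le>k. if j = 1 then (if k = D then \<sigma> else 0) else 0)"
      by (simp add: c_def sum.distrib)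
    also have "\<dots> = t ^ k + (if 1 \<le> k then (if k = D then \<sigma> else 0) else 0)" by simp
    also have "\<dots> = t ^ k + (if k = D then \<sigma> else 0)" using assms(1) by auto
    finally show ?thesis .
  qed
  have eq: "(t + h) ^ k - t ^ k - (if k = D then \<sigma> else 0) = (\<Sum>j\<le>k. g j - c j)"
    using ex csum by (simp add: sum_subtractf)
  have bnd: "\<bar>g j - c j\<bar> \<le> real (k choose j) * H ^ j / t" if jk: "j \<le> k" for j
  proof -
    have rnn: "real (k choose j) * H ^ j / t \<ge> 0" using H0 tpos by simp
    consider "j = 0" | "j = 1 \<and> k = D" | "j \<ge> 1 \<and> \<not> (j = 1 \<and> k = D)" by linarith
    then show ?thesis
    proof cases
      case 1
      then have "g j - c j = 0" by (simp add: g_def c_def)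
      then show ?thesis using rnn by simp
    next
      case 2
      have "g 1 = real D * h * t ^ (D - 1)" using 2 by (simp add: g_def)
      also have "\<dots> = \<sigma>" unfolding h_def using assms(1) tpos by simp
      finally have "g j - c j = 0" using 2 by (simp add: c_def)
      then show ?thesis using rnn by simp
    next
      case 3
      then have cj: "c j = 0" by (auto simp: c_def)
      have gnn: "g j \<ge> 0" unfolding g_def using hpos tpos by simp
      have "h ^ j * t ^ (k - j) \<le> H ^ j / t"
        unfolding h_def using term_bound[OF assms(1,2) _ jk _ assms(3,4,5)] 3 by auto
      then have "real (k choose j) * (h ^ j * t ^ (k - j)) \<le> real (k choose j) * (H ^ j / t)"
        by (rule mult_left_mono) simp
      then have "g j \<le> real (k choose j) * (H ^ j / t)"
        unfolding g_def by (simp only: mult.assoc)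
      then show ?thesis using cj gnn by simp
    qed
  qed
  have "\<bar>(t + h) ^ k - t ^ k - (if k = D then \<sigma> else 0)\<bar> \<le> (\<Sum>j\<le>k. \<bar>g j - c j\<bar>)"
    unfolding eq by (rule sum_abs)
  also have "\<dots> \<le> (\<Sum>j\<le>k. real (k choose j) * H ^ j / t)"
    by (rule sum_mono) (use bnd in auto)
  also have "\<dots> = (\<Sum>j\<le>k. real (k choose j) * H ^ j * 1 ^ (k - j)) / t"
    by (simp add: sum_divide_distrib)
  also have "\<dots> = (1 + H) ^ k / t"
    using binomial_ring[of H 1 k] by (simp add: add.commute)
  finally show ?thesis unfolding h_def .
qed

definition pc :: "(nat \<Rightarrow> 'v::real_vector) \<Rightarrow> nat \<Rightarrow> real \<Rightarrow> 'v" where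
  "pc a D t = (\<Sum>k\<le>D. t ^ k *\<^sub>R a k)"

lemma lin_est:
  fixes a :: "nat \<Rightarrow> 'v::real_normed_vector"
  assumes "1 \<le> D" "0 \<le> H" "\<eta> > 0"
  shows "\<exists>T\<ge>1. \<forall>t\<ge>T. \<forall>\<sigma>\<in>{0..H}.
    norm (pc a D (t + \<sigma> / (real D * t ^ (D - 1))) - pc a D t - \<sigma> *\<^sub>R a D) < \<eta>"
proof -
  define M where "M = (\<Sum>k\<le>D. (1 + H) ^ k * norm (a k))"
  have M0: "M \<ge> 0" unfolding M_def using assms(2) by (intro sum_nonneg) simp
  define T where "T = max 1 (M / \<eta> + 1)"
  have T1: "1 \<le> T" by (simp add: T_def)
  have "norm (pc a D (t + \<sigma> / (real D * t ^ (D - 1))) - pc a D t - \<sigma> *\<^sub>R a D) < \<eta>"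
    if t: "T \<le> t" and \<sigma>: "\<sigma> \<in> {0..H}" for t \<sigma>
  proof -
    define h where "h = \<sigma> / (real D * t ^ (D - 1))"
    have t1: "1 \<le> t" using t T1 by simp
    have tpos: "t > 0" using t1 by simp
    have d: "(\<Sum>k\<le>D. (if k = D then \<sigma> *\<^sub>R a k else 0)) = \<sigma> *\<^sub>R a D" by simp
    have "pc a D (t + h) - pc a D t - \<sigma> *\<^sub>R a D
        = (\<Sum>k\<le>D. ((t + h) ^ k - t ^ k - (if k = D then \<sigma> else 0)) *\<^sub>R a k)"
    proof -
      have "(\<Sum>k\<le>D. ((t + h) ^ k - t ^ k - (if k = D then \<sigma> else 0)) *\<^sub>R a k)
          = (\<Sum>k\<le>D. (t + h) ^ k *\<^sub>R a k - t ^ k *\<^sub>R a k - (if k = D then \<sigma> *\<^sub>R a k else 0))"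
        by (intro sum.cong refl) (simp add: scaleR_diff_left)
      also have "\<dots> = pc a D (t + h) - pc a D t - \<sigma> *\<^sub>R a D"
        unfolding pc_def d[symmetric] by (simp add: sum_subtractf)
      finally show ?thesis by simp
    qed
    then have "norm (pc a D (t + h) - pc a D t - \<sigma> *\<^sub>R a D)
        \<le> (\<Sum>k\<le>D. \<bar>(t + h) ^ k - t ^ k - (if k = D then \<sigma> else 0)\<bar> * norm (a k))"
      by (simp add: norm_sum[THEN order_trans])
    also have "\<dots> \<le> (\<Sum>k\<le>D. (1 + H) ^ k / t * norm (a k))"
    proof (rule sum_mono)
      fix k assume "k \<in> {..D}"
      then have "k \<le> D" by simp
      then show "\<bar>(t + h) ^ k - t ^ k - (if k = D then \<sigma> else 0)\<bar> * norm (a k) \<le> (1 + H) ^ k / t * norm (a k)"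
        unfolding h_def using scalar_bound[where t=t and \<sigma>=\<sigma> and H=H and D=D and k=k] \<open>k \<le> D\<close> t1 assms(1) \<sigma>
        by (intro mult_right_mono) auto
    qed
    also have "\<dots> = M / t" unfolding M_def by (simp add: sum_divide_distrib)
    also have "\<dots> < \<eta>"
    proof -
      have "M / \<eta> < t" using t by (simp add: T_def)
      then have "M < \<eta> * t" using assms(3) by (simp add: divide_less_eq mult.commute)
      then show ?thesis using tpos by (simp add: divide_less_eq mult.commute)
    qed
    finally show ?thesis unfolding h_def .
  qed
  then show ?thesis using T1 by blast
qed



definition good :: "(('v::plus) \<Rightarrow> complex) set \<Rightarrow> 'v set \<Rightarrow> (real \<Rightarrow> 'v) \<Rightarrow> 'v \<Rightarrow> bool" where
  "good F U P y \<longleftrightarrow> (\<forall>e>0. \<forall>T. \<exists>t\<ge>T. \<exists>u\<in>U. cl F e (P t) (y + u))"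

lemma pc_Suc: "pc a (Suc D) t = pc a D t + t ^ Suc D *\<^sub>R a (Suc D)"
  unfolding pc_def by simp

lemma pc_0: "pc a 0 t = a 0"
  unfolding pc_def by simp

lemma curve_main:
  fixes F :: "('v::euclidean_space \<Rightarrow> complex) set"
  assumes F: "finite F" "F \<subseteq> continuous_characters"
  shows "\<forall>(a::nat \<Rightarrow> 'v) U y. subspace U \<longrightarrow> y - a 0 \<in> span (a ` {1..D} \<union> U) \<longrightarrow> good F U (pc a D) y"
proof (induction D)
  case 0
  show ?case
  proof (intro allI impI)
    fix a :: "nat \<Rightarrow> 'v" and U y
    assume U: "subspace U" and y: "y - a 0 \<in> span (a ` {1..0} \<union> U)"
    have "y - a 0 \<in> U" using y span_minimal[OF order_refl U] by auto
    then have u: "a 0 - y \<in> U" using subspace_neg[OF U] by fastforce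
    show "good F U (pc a 0) y"
      unfolding good_def
    proof (intro allI impI)
      fix e :: real and T :: real assume e: "e > 0"
      have "cl F e (pc a 0 T) (y + (a 0 - y))" using cl_refl[OF e] by (simp add: pc_0)
      then show "\<exists>t\<ge>T. \<exists>u\<in>U. cl F e (pc a 0 t) (y + u)" using u by blast
    qed
  qed
next
  case (Suc D)
  show ?case
  proof (intro allI impI)
    fix a :: "nat \<Rightarrow> 'v" and U y
    assume U: "subspace U" and y: "y - a 0 \<in> span (a ` {1..Suc D} \<union> U)"
    define b where "b = a (Suc D)"
    define U' where "U' = span (insert b U)"
    have U': "subspace U'" unfolding U'_def by simp
    have UU': "U \<subseteq> U'" unfolding U'_def by (meson span_superset subset_insertI subset_trans)
    have bU': "b \<in> U'" unfolding U'_def by (simp add: span_base)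
    have sub: "a ` {1..Suc D} \<union> U \<subseteq> span (a ` {1..D} \<union> U')"
    proof
      fix x assume "x \<in> a ` {1..Suc D} \<union> U"
      then consider k where "k \<in> {1..D}" "x = a k" | "x = b" | "x \<in> U"
        unfolding b_def by (auto simp: le_Suc_eq)
      then show "x \<in> span (a ` {1..D} \<union> U')"
      proof cases
        case 1 then show ?thesis by (simp add: span_base)
      next
        case 2 then show ?thesis using bU' by (simp add: span_base)
      next
        case 3 then show ?thesis using UU' by (auto intro: span_base)
      qed
    qed
    have "span (a ` {1..Suc D} \<union> U) \<subseteq> span (a ` {1..D} \<union> U')"
      by (rule span_minimal[OF sub]) simp
    then have y': "y - a 0 \<in> span (a ` {1..D} \<union> U')" using y by blast
    have IH: "good F U' (pc a D) y" using Suc.IH U' y' by blast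
    show "good F U (pc a (Suc D)) y"
      unfolding good_def
    proof (intro allI impI)
      fix e :: real and T :: real assume e: "e > 0"
      define e3 where "e3 = e / 3"
      have e3: "e3 > 0" using e by (simp add: e3_def)
      obtain H where H: "H \<ge> 0" "\<forall>r. \<exists>\<sigma>\<in>{0..H}. cl F e3 (\<sigma> *\<^sub>R b) (r *\<^sub>R b)"
        using cl_unifH[OF F e3, of b] by blast
      obtain d where d: "d > 0" "\<forall>x::'v. norm x < d \<longrightarrow> cl F e3 x 0"
        using cl_near0[OF F e3] by blast
      obtain T1 where T1: "T1 \<ge> 1" "\<forall>t\<ge>T1. \<forall>\<sigma>\<in>{0..H}.
          norm (pc a (Suc D) (t + \<sigma> / (real (Suc D) * t ^ (Suc D - 1))) - pc a (Suc D) t - \<sigma> *\<^sub>R a (Suc D)) < d"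
        using lin_est[of "Suc D" H d a] H(1) d(1) by auto
      obtain t0 u' where t0: "t0 \<ge> max T T1" and u': "u' \<in> U'" and c0: "cl F e3 (pc a D t0) (y + u')"
        using IH e3 unfolding good_def by blast
      obtain s where s: "u' - s *\<^sub>R b \<in> span U" using u' unfolding U'_def span_insert by blast
      define u where "u = u' - s *\<^sub>R b"
        have uU: "u \<in> U" using s span_minimal[OF order_refl U] by (auto simp: u_def)
      define r where "r = s + t0 ^ Suc D"
      have c1: "cl F e3 (pc a (Suc D) t0) (y + u + r *\<^sub>R b)"
      proof -
        have A: "cl F e3 (pc a D t0 + t0 ^ Suc D *\<^sub>R b) (y + u' + t0 ^ Suc D *\<^sub>R b)"
          using c0 cl_transl[OF F(2)] by blast
        have eq: "y + u' + t0 ^ Suc D *\<^sub>R b = y + u + r *\<^sub>R b"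
          by (simp add: u_def r_def scaleR_add_left algebra_simps)
        have pceq: "pc a D t0 + t0 ^ Suc D *\<^sub>R b = pc a (Suc D) t0" by (simp add: pc_Suc b_def)
        show ?thesis using A unfolding pceq eq .
      qed
      obtain \<sigma> where \<sigma>: "\<sigma> \<in> {0..H}" "cl F e3 (\<sigma> *\<^sub>R b) ((- r) *\<^sub>R b)"
        using H(2) by blast
      define t1 where "t1 = t0 + \<sigma> / (real (Suc D) * t0 ^ (Suc D - 1))"
      have t0pos: "t0 \<ge> 1" using t0 T1(1) by simp
      have "\<sigma> / (real (Suc D) * t0 ^ (Suc D - 1)) \<ge> 0" using \<sigma>(1) t0pos by simp
      then have t1: "t1 \<ge> T" using t0 by (simp add: t1_def)
      have "norm (pc a (Suc D) t1 - pc a (Suc D) t0 - \<sigma> *\<^sub>R b) < d"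
        using T1(2) t0 \<sigma>(1) by (simp add: t1_def b_def)
      then have "cl F e3 (pc a (Suc D) t1 - pc a (Suc D) t0 - \<sigma> *\<^sub>R b) 0" using d(2) by blast
      then have c2: "cl F e3 (pc a (Suc D) t1) (pc a (Suc D) t0 + \<sigma> *\<^sub>R b)"
        using cl_diff[OF F(2), of e3 "pc a (Suc D) t1" "pc a (Suc D) t0 + \<sigma> *\<^sub>R b"]
        by (simp add: algebra_simps)
      have c3: "cl F e3 (pc a (Suc D) t0 + \<sigma> *\<^sub>R b) (y + u + r *\<^sub>R b + \<sigma> *\<^sub>R b)"
        using c1 cl_transl[OF F(2)] by blast
      have "cl F e3 (\<sigma> *\<^sub>R b + (y + u + r *\<^sub>R b)) ((- r) *\<^sub>R b + (y + u + r *\<^sub>R b))"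
        using \<sigma>(2) cl_transl[OF F(2)] by blast
      then have c4: "cl F e3 (y + u + r *\<^sub>R b + \<sigma> *\<^sub>R b) (y + u)"
        by (simp add: algebra_simps)
      have "cl F (e3 + e3) (pc a (Suc D) t1) (y + u + r *\<^sub>R b + \<sigma> *\<^sub>R b)"
        by (rule cl_trans[OF c2 c3])
      then have "cl F (e3 + e3 + e3) (pc a (Suc D) t1) (y + u)"
        by (rule cl_trans[OF _ c4])
      then have "cl F e (pc a (Suc D) t1) (y + u)" by (simp add: e3_def)
      then show "\<exists>t\<ge>T. \<exists>u\<in>U. cl F e (pc a (Suc D) t) (y + u)" using t1 uU by blast
    qed
  qed
qed

lemma curve_closure:
  fixes a :: "nat \<Rightarrow> 'v::euclidean_space"
  assumes "y - a 0 \<in> span (a ` {1..D})"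
  shows "y \<in> bohr_topology closure_of (range (pc a D))"
proof (rule bohr_closure_I)
  fix F :: "('v \<Rightarrow> complex) set" and e :: real
  assume F: "finite F" "F \<subseteq> continuous_characters" and e: "e > 0"
  have "y - a 0 \<in> span (a ` {1..D} \<union> {0})"
    using assms span_mono[of "a ` {1..D}" "a ` {1..D} \<union> {0}"] by blast
  then have "good F {0} (pc a D) y" using curve_main[OF F, of D] by simp
  then obtain t u where "u \<in> {0}" "cl F e (pc a D t) (y + u)" using e unfolding good_def by blast
  then show "\<exists>x\<in>range (pc a D). cl F e x y" by auto
qed



definition scl :: "real \<Rightarrow> ('v::real_vector \<Rightarrow> 'v) \<Rightarrow> 'v \<Rightarrow> 'v" where
  "scl c X = (\<lambda>v. c *\<^sub>R X v)"

lemma funpow_lin: "linear (X::'v::real_vector \<Rightarrow> 'v) \<Longrightarrow> linear (X ^^ k)"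
proof (induction k)
  case 0 then show ?case by (simp add: linear_iff)
next
  case (Suc k) then show ?case using linear_compose[of "X ^^ k" X] by (simp add: o_def)
qed

lemma scl_pow: "linear (X::'v::real_vector \<Rightarrow> 'v) \<Longrightarrow> (scl c X) ^^ k = scl (c ^ k) (X ^^ k)"
proof (induction k)
  case 0 then show ?case by (simp add: scl_def id_def)
next
  case (Suc k)
  show ?case
  proof
    fix v
    have "(scl c X ^^ Suc k) v = c *\<^sub>R X (c ^ k *\<^sub>R (X ^^ k) v)"
      using Suc by (simp add: scl_def)
    also have "\<dots> = c ^ Suc k *\<^sub>R X ((X ^^ k) v)"
      using Suc.prems by (simp add: linear_scale)
    finally show "(scl c X ^^ Suc k) v = scl (c ^ Suc k) (X ^^ Suc k) v" by (simp add: scl_def)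
  qed
qed

lemma nil_zero:
  fixes X :: "'v::real_vector \<Rightarrow> 'v"
  assumes "linear X" "X ^^ n = (\<lambda>_. 0)" "n \<le> k"
  shows "(X ^^ k) w = 0"
proof -
  have "X ^^ k = X ^^ (k - n) \<circ> X ^^ n" using assms(3) by (simp add: funpow_add[symmetric])
  then show ?thesis using assms(2) linear_0[OF funpow_lin[OF assms(1), of "k - n"]] by simp
qed

lemma nil_Suc:
  fixes X :: "'v::real_vector \<Rightarrow> 'v"
  assumes "linear X" "X ^^ n = (\<lambda>_. 0)"
  shows "X ^^ Suc n = (\<lambda>_. 0)"
  using nil_zero[OF assms, of "Suc n"] by auto

lemma exp_fin:
  fixes X :: "'v::euclidean_space \<Rightarrow> 'v"
  assumes "linear X" "X ^^ n = (\<lambda>_. 0)"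
  shows "op_exp (scl c X) w = (\<Sum>k<n. (c ^ k / fact k) *\<^sub>R (X ^^ k) w)"
proof -
  have "op_exp (scl c X) w = (\<Sum>k. (1 / fact k) *\<^sub>R (scl c X ^^ k) w)" by (simp add: op_exp_def)
  also have "\<dots> = (\<Sum>k<n. (1 / fact k) *\<^sub>R (scl c X ^^ k) w)"
  proof (rule suminf_finite)
    fix k assume "k \<notin> {..<n}"
    then have "(X ^^ k) w = 0" using nil_zero[OF assms] by simp
    then show "(1 / fact k) *\<^sub>R (scl c X ^^ k) w = 0" using scl_pow[OF assms(1)] by (simp add: scl_def)
  qed simp
  also have "\<dots> = (\<Sum>k<n. (c ^ k / fact k) *\<^sub>R (X ^^ k) w)"
    using scl_pow[OF assms(1)] by (intro sum.cong refl) (simp add: scl_def)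
  finally show ?thesis .
qed

lemma binom_inv:
  fixes c :: real
  shows "(\<Sum>i\<le>k. c ^ i / fact i * ((- c) ^ (k - i) / fact (k - i))) = (if k = 0 then 1 else 0)"
proof -
  have "(c + - c) ^ k = (\<Sum>i\<le>k. real (k choose i) * c ^ i * (- c) ^ (k - i))"
    by (rule binomial_ring)
  also have "\<dots> = (\<Sum>i\<le>k. fact k * (c ^ i / fact i * ((- c) ^ (k - i) / fact (k - i))))"
    by (intro sum.cong refl) (simp add: binomial_fact)
  also have "\<dots> = fact k * (\<Sum>i\<le>k. c ^ i / fact i * ((- c) ^ (k - i) / fact (k - i)))"
    by (simp add: sum_distrib_left)
  finally have "(\<Sum>i\<le>k. c ^ i / fact i * ((- c) ^ (k - i) / fact (k - i))) = 0 ^ k / fact k"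
    by (simp add: field_simps)
  then show ?thesis by simp
qed

lemma exp_inv:
  fixes X :: "'v::euclidean_space \<Rightarrow> 'v"
  assumes lin: "linear X" and nil0: "X ^^ n0 = (\<lambda>_. 0)"
  shows "op_exp (scl c X) (op_exp (scl (- c) X) w) = w"
proof -
  define n where "n = Suc n0"
  have nil: "X ^^ n = (\<lambda>_. 0)" unfolding n_def by (rule nil_Suc[OF lin nil0])
  define A where "A k = (X ^^ k) w" for k
  have Az: "A k = 0" if "n \<le> k" for k using nil_zero[OF lin nil that] by (simp add: A_def)
  define f where "f i j = (c ^ i / fact i * ((- c) ^ j / fact j)) *\<^sub>R A (i + j)" for i j
  have "op_exp (scl c X) (op_exp (scl (- c) X) w)
      = (\<Sum>i<n. (c ^ i / fact i) *\<^sub>R (X ^^ i) (\<Sum>j<n. ((- c) ^ j / fact j) *\<^sub>R (X ^^ j) w))"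
    by (simp add: exp_fin[OF lin nil])
  also have "\<dots> = (\<Sum>i<n. \<Sum>j<n. f i j)"
  proof (intro sum.cong refl)
    fix i
    have li: "linear (X ^^ i)" by (rule funpow_lin[OF lin])
    have "(X ^^ i) (\<Sum>j<n. ((- c) ^ j / fact j) *\<^sub>R (X ^^ j) w) = (\<Sum>j<n. ((- c) ^ j / fact j) *\<^sub>R A (i + j))"
      by (simp add: linear_sum[OF li] linear_scale[OF li] A_def funpow_add)
    then show "(c ^ i / fact i) *\<^sub>R (X ^^ i) (\<Sum>j<n. ((- c) ^ j / fact j) *\<^sub>R (X ^^ j) w) = (\<Sum>j<n. f i j)"
      by (simp add: f_def scaleR_sum_right)
  qed
  also have "\<dots> = (\<Sum>(i, j)\<in>{..<n} \<times> {..<n}. f i j)"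
    by (simp add: sum.cartesian_product)
  also have "\<dots> = (\<Sum>(i, j)\<in>{(i, j). i + j < n}. f i j)"
  proof (rule sum.mono_neutral_right)
    show "finite ({..<n} \<times> {..<n})" by simp
    show "{(i, j). i + j < n} \<subseteq> {..<n} \<times> {..<n}" by auto
    show "\<forall>x\<in>{..<n} \<times> {..<n} - {(i, j). i + j < n}. (case x of (i, j) \<Rightarrow> f i j) = 0"
    proof
      fix x assume x: "x \<in> {..<n} \<times> {..<n} - {(i, j). i + j < n}"
      obtain i j where ij: "x = (i, j)" by (cases x)
      then have "n \<le> i + j" using x by auto
      then show "(case x of (i, j) \<Rightarrow> f i j) = 0" using ij Az by (simp add: f_def)
    qed
  qed
  also have "\<dots> = (\<Sum>k<n. \<Sum>i\<le>k. f i (k - i))"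
    by (rule sum.triangle_reindex)
  also have "\<dots> = (\<Sum>k<n. (if k = 0 then 1 else 0) *\<^sub>R A k)"
  proof (intro sum.cong refl)
    fix k
    have "(\<Sum>i\<le>k. f i (k - i)) = (\<Sum>i\<le>k. (c ^ i / fact i * ((- c) ^ (k - i) / fact (k - i))) *\<^sub>R A k)"
      by (intro sum.cong refl) (simp add: f_def)
    also have "\<dots> = (\<Sum>i\<le>k. c ^ i / fact i * ((- c) ^ (k - i) / fact (k - i))) *\<^sub>R A k"
      by (simp add: scaleR_sum_left)
    finally show "(\<Sum>i\<le>k. f i (k - i)) = (if k = 0 then 1 else 0) *\<^sub>R A k"
      using binom_inv[of c k] by simp
  qed
  also have "\<dots> = (\<Sum>k<n. if k = 0 then A k else 0)" by (intro sum.cong refl) simp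
  also have "\<dots> = A 0" by (simp add: n_def)
  also have "\<dots> = w" by (simp add: A_def)
  finally show ?thesis .
qed



definition polyfun :: "(real \<Rightarrow> 'v::euclidean_space) \<Rightarrow> bool" where
  "polyfun Q \<longleftrightarrow> (\<forall>b\<in>Basis. \<exists>p::real poly. \<forall>t. Q t \<bullet> b = poly p t)"

lemma pf_const: "polyfun (\<lambda>t. w)"
  unfolding polyfun_def by (auto intro!: exI[of _ "[:w \<bullet> _:]"])

lemma pf_add: "polyfun Q \<Longrightarrow> polyfun R \<Longrightarrow> polyfun (\<lambda>t. Q t + R t)"
  unfolding polyfun_def
proof (intro ballI)
  fix b :: 'a assume Q: "\<forall>b\<in>Basis. \<exists>p. \<forall>t. Q t \<bullet> b = poly p t" and R: "\<forall>b\<in>Basis. \<exists>p. \<forall>t. R t \<bullet> b = poly p t"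
    and b: "b \<in> Basis"
  obtain p where p: "\<forall>t. Q t \<bullet> b = poly p t" using Q b by blast
  obtain q where q: "\<forall>t. R t \<bullet> b = poly q t" using R b by blast
  have "\<forall>t. (Q t + R t) \<bullet> b = poly (p + q) t" using p q by (simp add: inner_add_left)
  then show "\<exists>p. \<forall>t. (Q t + R t) \<bullet> b = poly p t" by blast
qed

lemma pf_smult: "polyfun Q \<Longrightarrow> polyfun (\<lambda>t. poly q t *\<^sub>R Q t)"
  unfolding polyfun_def
proof (intro ballI)
  fix b :: 'a assume Q: "\<forall>b\<in>Basis. \<exists>p. \<forall>t. Q t \<bullet> b = poly p t" and b: "b \<in> Basis"
  obtain p where p: "\<forall>t. Q t \<bullet> b = poly p t" using Q b by blast
  have "\<forall>t. (poly q t *\<^sub>R Q t) \<bullet> b = poly (q * p) t" using p by simp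
  then show "\<exists>p. \<forall>t. (poly q t *\<^sub>R Q t) \<bullet> b = poly p t" by blast
qed

lemma pf_sum: "finite I \<Longrightarrow> (\<And>i. i \<in> I \<Longrightarrow> polyfun (Q i)) \<Longrightarrow> polyfun (\<lambda>t. \<Sum>i\<in>I. Q i t)"
proof (induction I rule: finite_induct)
  case empty then show ?case using pf_const[of 0] by simp
next
  case (insert x F)
  have "polyfun (\<lambda>t. Q x t + (\<Sum>i\<in>F. Q i t))"
    by (rule pf_add) (use insert in auto)
  then show ?case using insert(1,2) by simp
qed

lemma pf_lin:
  fixes X :: "'v::euclidean_space \<Rightarrow> 'v"
  assumes lin: "linear X" and Q: "polyfun Q"
  shows "polyfun (\<lambda>t. X (Q t))"
proof -
  obtain P where P: "\<forall>c\<in>Basis. \<forall>t. Q t \<bullet> c = poly (P c) t"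
    using Q unfolding polyfun_def by metis
  have eq: "X (Q t) = (\<Sum>c\<in>Basis. poly (P c) t *\<^sub>R X c)" for t
  proof -
    have "X (Q t) = X (\<Sum>c\<in>Basis. (Q t \<bullet> c) *\<^sub>R c)" by (simp add: euclidean_representation)
    also have "\<dots> = (\<Sum>c\<in>Basis. (Q t \<bullet> c) *\<^sub>R X c)" by (simp add: linear_sum[OF lin] linear_scale[OF lin])
    also have "\<dots> = (\<Sum>c\<in>Basis. poly (P c) t *\<^sub>R X c)" using P by (intro sum.cong refl) simp
    finally show ?thesis .
  qed
  have "polyfun (\<lambda>t. \<Sum>c\<in>Basis. poly (P c) t *\<^sub>R X c)"
    by (rule pf_sum) (auto intro: pf_smult pf_const)
  then show ?thesis using eq by simp
qed

lemma poly_upto: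
  fixes p :: "real poly"
  assumes "degree p \<le> D"
  shows "poly p t = (\<Sum>i\<le>D. coeff p i * t ^ i)"
proof -
  have "poly p t = (\<Sum>i\<le>degree p. coeff p i * t ^ i)" by (rule poly_altdef)
  also have "\<dots> = (\<Sum>i\<le>D. coeff p i * t ^ i)"
    by (rule sum.mono_neutral_left) (use assms in \<open>auto simp: coeff_eq_0\<close>)
  finally show ?thesis .
qed

lemma pf_pc:
  fixes Q :: "real \<Rightarrow> 'v::euclidean_space"
  assumes "polyfun Q"
  shows "\<exists>a D. Q = pc a D"
proof -
  obtain P where P: "\<forall>c\<in>Basis. \<forall>t. Q t \<bullet> c = poly (P c) t"
    using assms unfolding polyfun_def by metis
  define D where "D = Max ((\<lambda>c. degree (P c)) ` Basis)"
  have dD: "degree (P c) \<le> D" if "c \<in> Basis" for c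
    unfolding D_def using that by (intro Max_ge) auto
  define a where "a i = (\<Sum>c\<in>Basis. coeff (P c) i *\<^sub>R c)" for i
  have "Q t = pc a D t" for t
  proof -
    have "Q t = (\<Sum>c\<in>Basis. (Q t \<bullet> c) *\<^sub>R c)" by (simp add: euclidean_representation)
    also have "\<dots> = (\<Sum>c\<in>Basis. (\<Sum>i\<le>D. coeff (P c) i * t ^ i) *\<^sub>R c)"
      using P dD poly_upto by (intro sum.cong refl) simp
    also have "\<dots> = (\<Sum>c\<in>Basis. \<Sum>i\<le>D. t ^ i *\<^sub>R (coeff (P c) i *\<^sub>R c))"
      by (simp add: scaleR_sum_left mult.commute)
    also have "\<dots> = (\<Sum>i\<le>D. \<Sum>c\<in>Basis. t ^ i *\<^sub>R (coeff (P c) i *\<^sub>R c))"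
      by (rule sum.swap)
    also have "\<dots> = pc a D t"
      unfolding pc_def a_def by (simp add: scaleR_sum_right)
    finally show ?thesis .
  qed
  then show ?thesis by blast
qed

lemma affine_pc:
  fixes a :: "nat \<Rightarrow> 'v::euclidean_space"
  shows "affine {z. z - a 0 \<in> span (a ` {1..D})}"
  unfolding affine_def
proof (intro ballI allI impI)
  fix x y :: 'v and u v :: real
  assume x: "x \<in> {z. z - a 0 \<in> span (a ` {1..D})}" and y: "y \<in> {z. z - a 0 \<in> span (a ` {1..D})}"
    and uv: "u + v = 1"
  have "(u *\<^sub>R x + v *\<^sub>R y) - a 0 = u *\<^sub>R (x - a 0) + v *\<^sub>R (y - a 0)"
  proof -
    have "a 0 = u *\<^sub>R a 0 + v *\<^sub>R a 0" using uv by (simp add: scaleR_add_left[symmetric])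
    then show ?thesis by (simp add: algebra_simps)
  qed
  moreover have "u *\<^sub>R (x - a 0) + v *\<^sub>R (y - a 0) \<in> span (a ` {1..D})"
    using x y by (intro span_add span_scale) auto
  ultimately show "u *\<^sub>R x + v *\<^sub>R y \<in> {z. z - a 0 \<in> span (a ` {1..D})}" by simp
qed

lemma range_pc:
  fixes a :: "nat \<Rightarrow> 'v::euclidean_space"
  shows "range (pc a D) \<subseteq> {z. z - a 0 \<in> span (a ` {1..D})}"
proof
  fix z assume "z \<in> range (pc a D)"
  then obtain t where z: "z = pc a D t" by blast
  have "pc a D t - a 0 = (\<Sum>k\<le>D. t ^ k *\<^sub>R a k - (if k = 0 then a k else 0))"
    unfolding pc_def by (simp add: sum_subtractf)
  also have "\<dots> \<in> span (a ` {1..D})"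
  proof (rule span_sum)
    fix k assume "k \<in> {..D}"
    then have kD: "k \<le> D" by simp
    show "t ^ k *\<^sub>R a k - (if k = 0 then a k else 0) \<in> span (a ` {1..D})"
    proof (cases "k = 0")
      case True then show ?thesis by (simp add: span_zero)
    next
      case False
      then have "a k \<in> a ` {1..D}" using kD by auto
      then have "t ^ k *\<^sub>R a k \<in> span (a ` {1..D})" by (intro span_scale span_base)
      then show ?thesis using False by simp
    qed
  qed
  finally show "z \<in> {z. z - a 0 \<in> span (a ` {1..D})}" using z by simp
qed



fun fam :: "(real poly \<times> ('v::euclidean_space \<Rightarrow> 'v)) list \<Rightarrow> real \<Rightarrow> 'v \<Rightarrow> 'v" where
  "fam [] t = id"
| "fam ((p, X) # l) t = op_exp (scl (poly p t) X) \<circ> fam l t"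

definition nilL :: "('v::euclidean_space \<Rightarrow> 'v) set \<Rightarrow> bool" where
  "nilL L \<longleftrightarrow> (\<forall>X\<in>L. linear X \<and> (\<exists>n. X ^^ n = (\<lambda>_. 0)))"

definition valid :: "('v::euclidean_space \<Rightarrow> 'v) set \<Rightarrow> (real poly \<times> ('v \<Rightarrow> 'v)) list \<Rightarrow> bool" where
  "valid L l \<longleftrightarrow> (\<forall>pX\<in>set l. snd pX \<in> L)"

definition zero0 :: "(real poly \<times> ('v::euclidean_space \<Rightarrow> 'v)) list \<Rightarrow> bool" where
  "zero0 l \<longleftrightarrow> (\<forall>pX\<in>set l. poly (fst pX) 0 = 0)"

definition famneg :: "(real poly \<times> ('v::euclidean_space \<Rightarrow> 'v)) list \<Rightarrow> (real poly \<times> ('v \<Rightarrow> 'v)) list" where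
  "famneg l = rev (map (\<lambda>(p, X). (- p, X)) l)"

lemma fam_append: "fam (l1 @ l2) t = fam l1 t \<circ> fam l2 t"
proof (induction l1)
  case (Cons pX l) then show ?case by (cases pX) (simp add: o_assoc)
qed simp

lemma fam_comp: "fam (map (\<lambda>(p, X). (pcompose p q, X)) l) t = fam l (poly q t)"
proof (induction l)
  case (Cons pX l) then show ?case by (cases pX) (simp add: poly_pcompose)
qed simp

lemma exp_zero:
  fixes X :: "'v::euclidean_space \<Rightarrow> 'v"
  assumes "linear X" "X ^^ n = (\<lambda>_. 0)"
  shows "op_exp (scl 0 X) = id"
proof
  fix w
  have "op_exp (scl 0 X) w = (\<Sum>k<Suc n. (0 ^ k / fact k) *\<^sub>R (X ^^ k) w)"
    by (rule exp_fin[OF assms(1) nil_Suc[OF assms]])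
  also have "\<dots> = (\<Sum>k<Suc n. if k = 0 then (X ^^ k) w else 0)" by (intro sum.cong refl) simp
  also have "\<dots> = w" by simp
  finally show "op_exp (scl 0 X) w = id w" by simp
qed

lemma fam_zero:
  assumes "nilL L" "valid L l" "zero0 l"
  shows "fam l 0 = id"
  using assms(2,3)
proof (induction l)
  case Nil then show ?case by simp
next
  case (Cons pX l)
  obtain p X where pX: "pX = (p, X)" by (cases pX)
  have XL: "X \<in> L" and p0: "poly p 0 = 0" using Cons.prems pX by (auto simp: valid_def zero0_def)
  obtain n where "linear X" "X ^^ n = (\<lambda>_. 0)" using assms(1) XL unfolding nilL_def by blast
  then have "op_exp (scl 0 X) = id" by (rule exp_zero)
  moreover have "fam l 0 = id" using Cons by (auto simp: valid_def zero0_def)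
  ultimately show ?case using pX p0 by simp
qed

lemma exp_pair:
  fixes X :: "'v::euclidean_space \<Rightarrow> 'v"
  assumes "nilL L" "X \<in> L"
  shows "op_exp (scl c X) \<circ> op_exp (scl (- c) X) = id"
proof -
  obtain n where "linear X" "X ^^ n = (\<lambda>_. 0)" using assms unfolding nilL_def by blast
  then show ?thesis using exp_inv[of X n c] by (auto simp: fun_eq_iff)
qed

lemma fam_inv:
  assumes "nilL L" "valid L l"
  shows "fam l t \<circ> fam (famneg l) t = id \<and> fam (famneg l) t \<circ> fam l t = id"
  using assms(2)
proof (induction l)
  case Nil then show ?case by (simp add: famneg_def)
next
  case (Cons pX l)
  obtain p X where pX: "pX = (p, X)" by (cases pX)
  have XL: "X \<in> L" using Cons.prems pX by (auto simp: valid_def)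
  have vl: "valid L l" using Cons.prems by (simp add: valid_def)
  have IH: "fam l t \<circ> fam (famneg l) t = id" "fam (famneg l) t \<circ> fam l t = id"
    using Cons.IH[OF vl] by blast+
  define E where "E = op_exp (scl (poly p t) X)"
  define E' where "E' = op_exp (scl (- poly p t) X)"
  have EE: "E \<circ> E' = id" unfolding E_def E'_def by (rule exp_pair[OF assms(1) XL])
  have E'E: "E' \<circ> E = id" unfolding E_def E'_def using exp_pair[OF assms(1) XL, of "- poly p t"] by simp
  have f1: "fam (pX # l) t = E \<circ> fam l t" by (simp add: pX E_def)
  have f2: "fam (famneg (pX # l)) t = fam (famneg l) t \<circ> E'"
    by (simp add: pX E'_def famneg_def fam_append)
  have "E \<circ> fam l t \<circ> (fam (famneg l) t \<circ> E') = E \<circ> (fam l t \<circ> fam (famneg l) t) \<circ> E'"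
    by (simp add: o_assoc)
  also have "\<dots> = id" using IH(1) EE by simp
  finally have A: "fam (pX # l) t \<circ> fam (famneg (pX # l)) t = id" using f1 f2 by simp
  have "fam (famneg l) t \<circ> E' \<circ> (E \<circ> fam l t) = fam (famneg l) t \<circ> (E' \<circ> E) \<circ> fam l t"
    by (simp add: o_assoc)
  also have "\<dots> = id" using IH(2) E'E by simp
  finally have B: "fam (famneg (pX # l)) t \<circ> fam (pX # l) t = id" using f1 f2 by simp
  show ?case using A B by blast
qed

lemma fam_in:
  assumes "lie_subalgebra L" "valid L l"
  shows "fam l t \<in> lie_group_of L"
  using assms(2)
proof (induction l)
  case Nil then show ?case using lie_group_of.id_in[of L] by (simp add: id_def)
next
  case (Cons pX l)
  obtain p X where pX: "pX = (p, X)" by (cases pX)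
  have XL: "X \<in> L" using Cons.prems pX by (auto simp: valid_def)
  have "scl (poly p t) X \<in> L" using assms(1) XL unfolding lie_subalgebra_def scl_def by blast
  then have "op_exp (scl (poly p t) X) \<in> lie_group_of L" by (rule lie_group_of.exp_in)
  moreover have "fam l t \<in> lie_group_of L" using Cons by (auto simp: valid_def)
  ultimately have "op_exp (scl (poly p t) X) \<circ> fam l t \<in> lie_group_of L" by (rule lie_group_of.comp_in)
  then show ?case using pX by (simp only: fam.simps)
qed

lemma fam_pf:
  assumes "nilL L" "valid L l" "polyfun Q"
  shows "polyfun (\<lambda>t. fam l t (Q t))"
  using assms(2)
proof (induction l)
  case Nil then show ?case using assms(3) by simp
next
  case (Cons pX l)
  obtain p X where pX: "pX = (p, X)" by (cases pX)
  have XL: "X \<in> L" using Cons.prems pX by (auto simp: valid_def)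
  obtain n where lin: "linear X" and nil: "X ^^ n = (\<lambda>_. 0)" using assms(1) XL unfolding nilL_def by blast
  define R where "R t = fam l t (Q t)" for t
  have vl: "valid L l" using Cons.prems by (simp add: valid_def)
  have R: "polyfun R" using Cons.IH[OF vl] unfolding R_def by simp
  have eq: "fam (pX # l) t (Q t) = (\<Sum>k<n. poly (smult (1 / fact k) (p ^ k)) t *\<^sub>R (X ^^ k) (R t))" for t
    using exp_fin[OF lin nil, of "poly p t" "R t"] by (simp add: pX R_def poly_power)
  have "polyfun (\<lambda>t. \<Sum>k<n. poly (smult (1 / fact k) (p ^ k)) t *\<^sub>R (X ^^ k) (R t))"
  proof (rule pf_sum)
    fix k
    show "polyfun (\<lambda>t. poly (smult (1 / fact k) (p ^ k)) t *\<^sub>R (X ^^ k) (R t))"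
      by (rule pf_smult[OF pf_lin[OF funpow_lin[OF lin] R]])
  qed simp
  then show ?case using eq by simp
qed

lemma group_fam:
  assumes "g \<in> lie_group_of L" "nilL L"
  shows "\<exists>l. valid L l \<and> zero0 l \<and> fam l 1 = g"
  using assms(1)
proof (induction rule: lie_group_of.induct)
  case id_in
  show ?case by (rule exI[of _ "[]"]) (simp add: valid_def zero0_def)
next
  case (exp_in X)
  have "scl 1 X = X" by (simp add: scl_def)
  then have "fam [([:0, 1:], X)] 1 = op_exp X" by simp
  moreover have "valid L [([:0, 1:], X)]" "zero0 [([:0, 1:], X)]"
    using exp_in by (auto simp: valid_def zero0_def)
  ultimately show ?case by blast
next
  case (comp_in g h)
  then obtain l1 l2 where "valid L l1" "zero0 l1" "fam l1 1 = g" "valid L l2" "zero0 l2" "fam l2 1 = h"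
    by blast
  then have "valid L (l1 @ l2) \<and> zero0 (l1 @ l2) \<and> fam (l1 @ l2) 1 = g \<circ> h"
    by (auto simp: valid_def zero0_def fam_append)
  then show ?case by blast
next
  case (inv_in g)
  then obtain l where l: "valid L l" "zero0 l" "fam l 1 = g" by blast
  have v: "valid L (famneg l)" unfolding valid_def
  proof
    fix pX assume "pX \<in> set (famneg l)"
    then obtain q where q: "q \<in> set l" "pX = (\<lambda>(p, X). (- p, X)) q" by (auto simp: famneg_def)
    obtain p X where "q = (p, X)" by (cases q)
    then show "snd pX \<in> L" using q l(1) by (auto simp: valid_def)
  qed
  have z: "zero0 (famneg l)" unfolding zero0_def
  proof
    fix pX assume "pX \<in> set (famneg l)"
    then obtain q where q: "q \<in> set l" "pX = (\<lambda>(p, X). (- p, X)) q" by (auto simp: famneg_def)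
    obtain p X where "q = (p, X)" by (cases q)
    then show "poly (fst pX) 0 = 0" using q l(2) by (auto simp: zero0_def)
  qed
  have fi: "fam l 1 \<circ> fam (famneg l) 1 = id \<and> fam (famneg l) 1 \<circ> fam l 1 = id"
    by (rule fam_inv[OF assms(2) l(1)])
  have "inv (fam l 1) = fam (famneg l) 1"
    by (rule inv_unique_comp) (use fi in blast)+
  then have "fam (famneg l) 1 = inv g" using l(3) by simp
  then have "valid L (famneg l) \<and> zero0 (famneg l) \<and> fam (famneg l) 1 = inv g" using v z by simp
  then show ?case by (rule exI)
qed



lemma valid_map: "valid L l \<Longrightarrow> valid L (map (\<lambda>(p, X). (pcompose p q, X)) l)"
  unfolding valid_def
proof
  fix pX assume v: "\<forall>pX\<in>set l. snd pX \<in> L" and "pX \<in> set (map (\<lambda>(p, X). (pcompose p q, X)) l)"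
  then obtain r where r: "r \<in> set l" "pX = (\<lambda>(p, X). (pcompose p q, X)) r" by auto
  obtain p X where "r = (p, X)" by (cases r)
  then show "snd pX \<in> L" using r v by auto
qed

lemma interp:
  fixes L :: "('v::euclidean_space \<Rightarrow> 'v) set"
  assumes sub: "lie_subalgebra L" and nl: "nilL L"
  shows "finite S \<Longrightarrow> S \<subseteq> (\<lambda>g. g v) ` lie_group_of L \<Longrightarrow> \<exists>l. valid L l \<and> S \<subseteq> range (\<lambda>t. fam l t v)"
proof (induction S rule: finite_induct)
  case empty
  have "valid L []" by (simp add: valid_def)
  then show ?case by blast
next
  case (insert x S)
  obtain l where l: "valid L l" "S \<subseteq> range (\<lambda>t. fam l t v)" using insert by blast
  obtain h where h: "h \<in> lie_group_of L" "x = h v" using insert.prems by auto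
  have "\<forall>y\<in>S. \<exists>t. fam l t v = y" using l(2) by blast
  then obtain \<tau> where \<tau>: "\<forall>y\<in>S. fam l (\<tau> y) v = y" by metis
  define Tm where "Tm = \<tau> ` S"
  have fTm: "finite Tm" unfolding Tm_def using insert(1) by simp
  define \<tau>0 where "\<tau>0 = Max (insert 0 Tm) + 1"
  have \<tau>0: "\<tau>0 \<noteq> \<sigma>" if "\<sigma> \<in> Tm" for \<sigma>
  proof -
    have "\<sigma> \<le> Max (insert 0 Tm)" using fTm that by simp
    then show ?thesis unfolding \<tau>0_def by simp
  qed
  define lp where "lp = (\<Prod>\<sigma>\<in>Tm. [:- \<sigma>, 1:])"
  have pl: "poly lp t = (\<Prod>\<sigma>\<in>Tm. t - \<sigma>)" for t
    unfolding lp_def poly_prod by (intro prod.cong refl) simp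
  have l0: "poly lp \<tau>0 \<noteq> 0" unfolding pl using fTm \<tau>0 by simp
  define q where "q = smult (inverse (poly lp \<tau>0)) lp"
  have q1: "poly q \<tau>0 = 1" unfolding q_def using l0 by simp
  have q0: "poly q (\<tau> y) = 0" if "y \<in> S" for y
  proof -
    have "\<tau> y \<in> Tm" using that by (simp add: Tm_def)
    then have "poly lp (\<tau> y) = 0" unfolding pl using fTm by (auto intro: prod_zero)
    then show ?thesis by (simp add: q_def)
  qed
  define g0 where "g0 = fam l \<tau>0"
  have g0G: "g0 \<in> lie_group_of L" unfolding g0_def by (rule fam_in[OF sub l(1)])
  have "inv g0 \<circ> h \<in> lie_group_of L"
    by (rule lie_group_of.comp_in[OF lie_group_of.inv_in[OF g0G] h(1)])
  then obtain lk where lk: "valid L lk" "zero0 lk" "fam lk 1 = inv g0 \<circ> h"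
    using group_fam[OF _ nl] by blast
  define l' where "l' = l @ map (\<lambda>(p, X). (pcompose p q, X)) lk"
  have vl': "valid L l'" using l(1) valid_map[OF lk(1), of q] unfolding l'_def valid_def by auto
  have fl': "fam l' t = fam l t \<circ> fam lk (poly q t)" for t
    unfolding l'_def by (simp add: fam_append fam_comp)
  have lk0: "fam lk 0 = id" by (rule fam_zero[OF nl lk(1,2)])
  have "S \<subseteq> range (\<lambda>t. fam l' t v)"
  proof
    fix y assume y: "y \<in> S"
    have "fam l' (\<tau> y) v = y" using fl' q0[OF y] lk0 \<tau> y by simp
    then show "y \<in> range (\<lambda>t. fam l' t v)" by (metis rangeI)
  qed
  moreover have "x \<in> range (\<lambda>t. fam l' t v)"
  proof -
    have "fam l \<tau>0 \<circ> fam (famneg l) \<tau>0 = id" using fam_inv[OF nl l(1)] by blast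
    then have "surj g0" unfolding g0_def by (metis surjI comp_apply id_apply)
    then have "g0 (inv g0 (h v)) = h v" by (rule surj_f_inv_f)
    then have "fam l' \<tau>0 v = x" using fl' q1 lk(3) h(2) by (simp add: g0_def)
    then show ?thesis by (metis rangeI)
  qed
  ultimately show ?case using vl' by blast
qed



theorem theorem2:
  fixes L :: "('v::euclidean_space \<Rightarrow> 'v) set" and v :: 'v
  assumes "lie_subalgebra L"
    and "nilpotent_lie_algebra L"
    and "\<forall>X\<in>L. nilpotent_op X"
  shows "affine hull ((\<lambda>g. g v) ` lie_group_of L)
           \<subseteq> bohr_topology closure_of ((\<lambda>g. g v) ` lie_group_of L)"
proof
  have nl: "nilL L" using assms(1,3) unfolding nilL_def lie_subalgebra_def nilpotent_op_def by blast
  fix y assume "y \<in> affine hull ((\<lambda>g. g v) ` lie_group_of L)"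
  then obtain S u where S: "finite S" "S \<noteq> {}" "S \<subseteq> (\<lambda>g. g v) ` lie_group_of L" "sum u S = 1"
    "(\<Sum>x\<in>S. u x *\<^sub>R x) = y"
    unfolding affine_hull_explicit by blast
  have yS: "y \<in> affine hull S" unfolding affine_hull_explicit using S by blast
  obtain l where l: "valid L l" "S \<subseteq> range (\<lambda>t. fam l t v)"
    using interp[OF assms(1) nl S(1,3)] by blast
  have "polyfun (\<lambda>t. fam l t v)" using fam_pf[OF nl l(1) pf_const[of v]] .
  then obtain a D where aD: "(\<lambda>t. fam l t v) = pc a D" using pf_pc by blast
  have "S \<subseteq> range (pc a D)" using l(2) unfolding aD .
  then have "S \<subseteq> {z. z - a 0 \<in> span (a ` {1..D})}" using range_pc[of a D] by (rule subset_trans)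
  then have "affine hull S \<subseteq> {z. z - a 0 \<in> span (a ` {1..D})}"
    by (rule hull_minimal) (rule affine_pc)
  then have "y - a 0 \<in> span (a ` {1..D})" using yS by blast
  then have "y \<in> bohr_topology closure_of (range (pc a D))" by (rule curve_closure)
  moreover have "range (pc a D) \<subseteq> (\<lambda>g. g v) ` lie_group_of L"
  proof
    fix z assume "z \<in> range (pc a D)"
    then obtain t where "z = fam l t v" using aD by (metis rangeE)
    moreover have "fam l t \<in> lie_group_of L" by (rule fam_in[OF assms(1) l(1)])
    ultimately show "z \<in> (\<lambda>g. g v) ` lie_group_of L" by blast
  qed
  ultimately show "y \<in> bohr_topology closure_of ((\<lambda>g. g v) ` lie_group_of L)"
    using closure_of_mono by blast
qed


end
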